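(* Let $j,k_G,k_H$ be positive integers with $j\le k_G\le k_H$, let $G$ be a $(j,k_G)$-biclique and $H$ a $(j,k_H)$-biclique, and let $g(x)$ and $h(x)$ be the interesting factors of $P_G(x)$ and $P_H(x)$ respectively. If $\bar G$ and $\bar H$ are matching equivalent, then $g(x)=h(x+k_H-k_G)$.
   Context: All graphs are finite and simple. For integers $1\le j\le k$, a $(j,k)$-biclique is a graph whose vertex set is the disjoint union of a $j$-clique and a $k$-clique, with an arbitrary set of additional edges each joining a vertex of the $j$-clique to a vertex of the $k$-clique; $\bar G$ denotes the complement of $G$. $P_G(x)$ is the chromatic polynomial, $(x)_n=x(x-1)\cdots(x-n+1)$ the falling factorial. For a $(j,k)$-biclique $G$, the polynomial $(x)_k$ divides $P_G(x)$, and the interesting factor of $P_G$ is the degree-$j$ polynomial $g(x)=P_G(x)/(x)_k$. $m_F^i$ denotes the number of matchings with $i$ edges in a graph $F$; two graphs $F_1,F_2$ are matching equivalent if $m_{F_1}^i=m_{F_2}^i$ for all $i\ge 0$. *)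

theory Defs
  imports "HOL-Library.FuncSet" "HOL-Computational_Algebra.Polynomial"
begin

definition all_pairs :: "'a set \<Rightarrow> 'a set set" where
  "all_pairs V = {e. \<exists>u v. u \<in> V \<and> v \<in> V \<and> u \<noteq> v \<and> e = {u, v}}"

definition simple_graph :: "'a set \<Rightarrow> 'a set set \<Rightarrow> bool" where
  "simple_graph V E \<longleftrightarrow> finite V \<and> E \<subseteq> all_pairs V"

definition compl_edges :: "'a set \<Rightarrow> 'a set set \<Rightarrow> 'a set set" where
  "compl_edges V E = all_pairs V - E"

definition biclique :: "nat \<Rightarrow> nat \<Rightarrow> 'a set \<Rightarrow> 'a set set \<Rightarrow> bool" where
  "biclique j k V E \<longleftrightarrow> simple_graph V E \<and>
     (\<exists>A B. A \<inter> B = {} \<and> V = A \<union> B \<and> card A = j \<and> card B = k \<and>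
            all_pairs A \<subseteq> E \<and> all_pairs B \<subseteq> E)"

definition matchings :: "'a set set \<Rightarrow> nat \<Rightarrow> 'a set set set" where
  "matchings E i = {M. M \<subseteq> E \<and> card M = i \<and>
       (\<forall>e\<in>M. \<forall>e'\<in>M. e \<noteq> e' \<longrightarrow> e \<inter> e' = {})}"

definition matching_number :: "'a set set \<Rightarrow> nat \<Rightarrow> nat" where
  "matching_number E i = card (matchings E i)"

definition matching_equivalent :: "'a set set \<Rightarrow> 'b set set \<Rightarrow> bool" where
  "matching_equivalent E1 E2 \<longleftrightarrow> (\<forall>i. matching_number E1 i = matching_number E2 i)"

definition colourings :: "'a set \<Rightarrow> 'a set set \<Rightarrow> nat \<Rightarrow> ('a \<Rightarrow> nat) set" where
  "colourings V E n = {f \<in> V \<rightarrow>\<^sub>E {..<n}. \<forall>u v. {u, v} \<in> E \<longrightarrow> u \<noteq> v \<longrightarrow> f u \<noteq> f v}"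

definition chrom_poly :: "'a set \<Rightarrow> 'a set set \<Rightarrow> int poly" where
  "chrom_poly V E = (THE p. \<forall>n::nat. poly p (int n) = int (card (colourings V E n)))"

definition falling_poly :: "nat \<Rightarrow> int poly" where
  "falling_poly k = (\<Prod>i<k. [:- int i, 1:])"

definition interesting_factor :: "nat \<Rightarrow> 'a set \<Rightarrow> 'a set set \<Rightarrow> int poly" where
  "interesting_factor k V E = chrom_poly V E div falling_poly k"

end

theory Submission
  imports Defs
begin

locale bic =
  fixes V :: "'a set" and E :: "'a set set" and A B :: "'a set"
  assumes fin: "finite V" and Esub: "E \<subseteq> all_pairs V" and disj: "A \<inter> B = {}"
    and VAB: "V = A \<union> B" and cA: "all_pairs A \<subseteq> E" and cB: "all_pairs B \<subseteq> E"
begin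

definition F where "F = compl_edges V E"

lemma finA: "finite A" and finB: "finite B" using fin VAB by auto

lemma E_in_V: "{u,v} \<in> E \<Longrightarrow> u \<in> V \<and> v \<in> V"
  using Esub unfolding all_pairs_def by (auto simp: doubleton_eq_iff)

lemma cliqueA: "a \<in> A \<Longrightarrow> a' \<in> A \<Longrightarrow> a \<noteq> a' \<Longrightarrow> {a,a'} \<in> E"
  using cA unfolding all_pairs_def by blast
lemma cliqueB: "a \<in> B \<Longrightarrow> a' \<in> B \<Longrightarrow> a \<noteq> a' \<Longrightarrow> {a,a'} \<in> E"
  using cB unfolding all_pairs_def by blast

lemma F_cases: "e \<in> F \<Longrightarrow> \<exists>a b. a \<in> A \<and> b \<in> B \<and> e = {a,b}"
proof -
  assume "e \<in> F"
  then obtain u v where uv: "u \<in> V" "v \<in> V" "u \<noteq> v" "e = {u,v}" "{u,v} \<notin> E"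
    unfolding F_def compl_edges_def all_pairs_def by auto
  show ?thesis
  proof (cases "u \<in> A")
    case True
    then have "v \<notin> A" using uv cliqueA by blast
    then show ?thesis using True uv VAB by auto
  next
    case False
    then have "u \<in> B" using uv VAB by auto
    then have "v \<notin> B" using uv cliqueB by blast
    then have "v \<in> A" using uv VAB by auto
    moreover have "e = {v,u}" using uv by auto
    ultimately show ?thesis using \<open>u \<in> B\<close> by blast
  qed
qed

lemma AB_in_F: "a \<in> A \<Longrightarrow> b \<in> B \<Longrightarrow> {a,b} \<in> F \<longleftrightarrow> {a,b} \<notin> E"
proof -
  assume "a \<in> A" "b \<in> B"
  then have "a \<noteq> b" "a \<in> V" "b \<in> V" using disj VAB by auto
  then have "{a,b} \<in> all_pairs V" unfolding all_pairs_def by blast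
  then show ?thesis unfolding F_def compl_edges_def by blast
qed

lemma finF: "finite F"
proof -
  have "F \<subseteq> Pow V" unfolding F_def compl_edges_def all_pairs_def by auto
  then show ?thesis using fin by (meson finite_Pow_iff finite_subset)
qed

definition Mats where "Mats = {M. M \<subseteq> F \<and> (\<forall>e\<in>M. \<forall>e'\<in>M. e \<noteq> e' \<longrightarrow> e \<inter> e' = {})}"

lemma finMats: "finite Mats"
proof -
  have "Mats \<subseteq> Pow F" unfolding Mats_def by auto
  then show ?thesis using finF by (meson finite_Pow_iff finite_subset)
qed

definition S where "S (n::nat) M = {f \<in> V \<rightarrow>\<^sub>E {..<n}. inj_on f A \<and> inj_on f B \<and>
   (\<forall>a\<in>A. \<forall>b\<in>B. f a = f b \<longleftrightarrow> {a,b} \<in> M)}"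

lemma Mats_sub: "M \<in> Mats \<Longrightarrow> M \<subseteq> F" unfolding Mats_def by blast
lemma Mats_disj: "M \<in> Mats \<Longrightarrow> e \<in> M \<Longrightarrow> e' \<in> M \<Longrightarrow> e \<inter> e' \<noteq> {} \<Longrightarrow> e = e'"
  unfolding Mats_def by blast
lemma Mats_cases: "M \<in> Mats \<Longrightarrow> e \<in> M \<Longrightarrow> \<exists>a b. a \<in> A \<and> b \<in> B \<and> e = {a,b}"
  using Mats_sub F_cases by blast

lemma S_disj:
  assumes "M \<in> Mats" "M' \<in> Mats" "f \<in> S n M" "f \<in> S n M'" shows "M = M'"
proof -
  have h1: "\<forall>a\<in>A. \<forall>b\<in>B. f a = f b \<longleftrightarrow> {a,b} \<in> M" using assms(3) unfolding S_def by blast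
  have h2: "\<forall>a\<in>A. \<forall>b\<in>B. f a = f b \<longleftrightarrow> {a,b} \<in> M'" using assms(4) unfolding S_def by blast
  have "e \<in> M'" if ein: "e \<in> M" for e
  proof -
    obtain a b where "a \<in> A" "b \<in> B" "e = {a,b}" using Mats_cases[OF assms(1) ein] by blast
    then show ?thesis using h1 h2 ein by blast
  qed
  moreover have "e \<in> M" if ein: "e \<in> M'" for e
  proof -
    obtain a b where "a \<in> A" "b \<in> B" "e = {a,b}" using Mats_cases[OF assms(2) ein] by blast
    then show ?thesis using h1 h2 ein by blast
  qed
  ultimately show ?thesis by blast
qed

lemma card_M_le: assumes "M \<in> Mats" shows "card M \<le> card A"
proof -
  define h where "h e = (SOME a. a \<in> e \<inter> A)" for e
  have h: "h e \<in> e \<inter> A" if ein: "e \<in> M" for e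
  proof -
    obtain a b where "a \<in> A" "b \<in> B" "e = {a,b}" using Mats_cases[OF assms(1) ein] by blast
    then have "\<exists>a. a \<in> e \<inter> A" by auto
    then show ?thesis unfolding h_def by (rule someI_ex)
  qed
  have "inj_on h M"
  proof (rule inj_onI)
    fix e e' assume "e \<in> M" "e' \<in> M" "h e = h e'"
    then have "h e \<in> e \<inter> e'" using h by (metis IntD1 IntI)
    then show "e = e'" using Mats_disj[OF assms \<open>e \<in> M\<close> \<open>e' \<in> M\<close>] by blast
  qed
  moreover have "h ` M \<subseteq> A" using h by blast
  ultimately show ?thesis using finA by (meson card_inj_on_le)
qed

lemma S_sub_col: assumes "M \<in> Mats" "f \<in> S n M" shows "f \<in> colourings V E n"
proof -
  have f: "f \<in> V \<rightarrow>\<^sub>E {..<n}" "inj_on f A" "inj_on f B"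
     "\<forall>a\<in>A. \<forall>b\<in>B. f a = f b \<longleftrightarrow> {a,b} \<in> M" using assms(2) unfolding S_def by blast+
  have "f u \<noteq> f v" if uv: "{u,v} \<in> E" "u \<noteq> v" for u v
  proof -
    have V: "u \<in> V" "v \<in> V" using E_in_V uv by auto
    have notF: "{u,v} \<notin> F" using uv unfolding F_def compl_edges_def by blast
    have notM: "{u,v} \<notin> M" using notF Mats_sub[OF assms(1)] by blast
    show ?thesis
    proof (cases "u \<in> A")
      case uA: True
      show ?thesis
      proof (cases "v \<in> A")
        case True then show ?thesis using uA uv f(2) by (meson inj_onD)
      next
        case False then have "v \<in> B" using V VAB by auto
        then show ?thesis using uA f(4) notM by blast
      qed
    next
      case uB': False
      then have uB: "u \<in> B" using V VAB by auto
      show ?thesis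
      proof (cases "v \<in> B")
        case True then show ?thesis using uB uv f(3) by (meson inj_onD)
      next
        case False then have "v \<in> A" using V VAB by auto
        moreover have "{v,u} \<notin> M" using notM by (simp add: insert_commute)
        ultimately show ?thesis using uB f(4) by metis
      qed
    qed
  qed
  then show ?thesis using f(1) unfolding colourings_def by blast
qed

lemma col_sub_S: assumes "f \<in> colourings V E n" shows "\<exists>M\<in>Mats. f \<in> S n M"
proof -
  have f: "f \<in> V \<rightarrow>\<^sub>E {..<n}" "\<And>u v. {u,v} \<in> E \<Longrightarrow> u \<noteq> v \<Longrightarrow> f u \<noteq> f v"
    using assms unfolding colourings_def by blast+
  have injA: "inj_on f A" by (rule inj_onI) (metis cliqueA f(2))
  have injB: "inj_on f B" by (rule inj_onI) (metis cliqueB f(2))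
  define M where "M = {{a,b} | a b. a \<in> A \<and> b \<in> B \<and> f a = f b}"
  have MF: "M \<subseteq> F"
  proof
    fix e assume "e \<in> M"
    then obtain a b where ab: "a \<in> A" "b \<in> B" "f a = f b" "e = {a,b}" unfolding M_def by blast
    have "a \<noteq> b" using ab disj by blast
    then have "{a,b} \<notin> E" using f(2) ab by blast
    then show "e \<in> F" using AB_in_F ab by blast
  qed
  have Md: "e \<inter> e' = {}" if ee: "e \<in> M" "e' \<in> M" "e \<noteq> e'" for e e'
  proof (rule ccontr)
    assume ne: "e \<inter> e' \<noteq> {}"
    obtain a b where ab: "a \<in> A" "b \<in> B" "f a = f b" "e = {a,b}" using ee(1) unfolding M_def by blast
    obtain a' b' where ab': "a' \<in> A" "b' \<in> B" "f a' = f b'" "e' = {a',b'}" using ee(2) unfolding M_def by blast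
    obtain x where x: "x \<in> e" "x \<in> e'" using ne by blast
    have "x = a \<or> x = b" "x = a' \<or> x = b'" using x ab ab' by auto
    then have "a = a' \<or> b = b'" using ab ab' disj by blast
    then have "a = a' \<and> b = b'" using ab ab' injA injB by (metis inj_onD)
    then show False using ee(3) ab ab' by simp
  qed
  have "M \<in> Mats" using MF Md unfolding Mats_def by blast
  moreover have "f \<in> S n M"
  proof -
    have "f a = f b \<longleftrightarrow> {a,b} \<in> M" if "a \<in> A" "b \<in> B" for a b
    proof
      assume "f a = f b" then show "{a,b} \<in> M" unfolding M_def using that by blast
    next
      assume "{a,b} \<in> M"
      then obtain a' b' where ab': "a' \<in> A" "b' \<in> B" "f a' = f b'" "{a,b} = {a',b'}" unfolding M_def by blast
      then have "a = a' \<and> b = b' \<or> a = b' \<and> b = a'" by (simp add: doubleton_eq_iff)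
      then have "a = a' \<and> b = b'" using that ab' disj by blast
      then show "f a = f b" using ab' by simp
    qed
    then show ?thesis unfolding S_def using f(1) injA injB by blast
  qed
  ultimately show ?thesis by blast
qed

lemma colourings_eq: "colourings V E n = (\<Union>M\<in>Mats. S n M)"
proof
  show "colourings V E n \<subseteq> (\<Union>M\<in>Mats. S n M)" using col_sub_S by (meson UN_iff subsetI)
  show "(\<Union>M\<in>Mats. S n M) \<subseteq> colourings V E n" using S_sub_col by (meson UN_E subsetI)
qed


lemma card_S: assumes M: "M \<in> Mats" shows "card (S n M) = (\<Prod>i\<in>{0..<card V - card M}. n - i)"
proof -
  define MB where "MB = {b \<in> B. \<exists>a\<in>A. {a,b} \<in> M}"
  define V' where "V' = V - MB"
  define p where "p b = (SOME a. a \<in> A \<and> {a,b} \<in> M)" for b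
  have p: "p b \<in> A \<and> {p b, b} \<in> M" if "b \<in> MB" for b
  proof -
    have "\<exists>a. a \<in> A \<and> {a,b} \<in> M" using that unfolding MB_def by blast
    then show ?thesis unfolding p_def by (rule someI_ex)
  qed
  have puniq: "p b = a" if ab: "a \<in> A" "b \<in> B" "{a,b} \<in> M" for a b
  proof -
    have bMB: "b \<in> MB" using ab unfolding MB_def by blast
    have "b \<in> {a,b} \<inter> {p b, b}" by blast
    then have "{a,b} = {p b, b}" using Mats_disj[OF M ab(3) conjunct2[OF p[OF bMB]]] by blast
    then have "a = p b \<or> (a = b \<and> b = p b)" by (simp add: doubleton_eq_iff)
    then show ?thesis using ab disj by blast
  qed
  have MBB: "MB \<subseteq> B" unfolding MB_def by blast
  have AV': "A \<subseteq> V'" using disj MBB VAB unfolding V'_def by blast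
  have V'V: "V' \<subseteq> V" unfolding V'_def by blast
  have MBV: "MB \<subseteq> V" using MBB VAB by blast
  have finMB: "finite MB" using MBV fin by (rule finite_subset)
  have finV': "finite V'" using V'V fin by (rule finite_subset)
  have cardMB: "card MB = card M"
  proof -
    define g where "g e = (SOME b. b \<in> e \<inter> B)" for e
    have g: "\<exists>a. a \<in> A \<and> e = {a, g e} \<and> g e \<in> B" if ein: "e \<in> M" for e
    proof -
      obtain a b where ab: "a \<in> A" "b \<in> B" "e = {a,b}" using Mats_cases[OF M ein] by blast
      then have "\<exists>b. b \<in> e \<inter> B" by auto
      then have "g e \<in> e \<inter> B" unfolding g_def by (rule someI_ex)
      then have "g e = a \<or> g e = b" "g e \<in> B" using ab by blast+
      then have "g e = b" using ab(1) disj by blast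
      then show ?thesis using ab by blast
    qed
    have injg: "inj_on g M"
    proof (rule inj_onI)
      fix e e' assume ee: "e \<in> M" "e' \<in> M" "g e = g e'"
      obtain a where a: "a \<in> A" "e = {a, g e}" using g[OF ee(1)] by blast
      obtain a' where a': "a' \<in> A" "e' = {a', g e'}" using g[OF ee(2)] by blast
      have "g e \<in> e \<inter> e'" using a a' ee(3) by blast
      then show "e = e'" using Mats_disj[OF M ee(1) ee(2)] by blast
    qed
    have gM: "g ` M = MB"
    proof
      show "g ` M \<subseteq> MB"
      proof
        fix x assume "x \<in> g ` M"
        then obtain e where e: "e \<in> M" "x = g e" by blast
        obtain a where a: "a \<in> A" "e = {a, g e}" "g e \<in> B" using g[OF e(1)] by blast
        then have "{a, x} \<in> M" "x \<in> B" using e by simp_all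
        then show "x \<in> MB" using a(1) unfolding MB_def by blast
      qed
      show "MB \<subseteq> g ` M"
      proof
        fix b assume b: "b \<in> MB"
        then obtain a where ab: "a \<in> A" "b \<in> B" "{a,b} \<in> M" unfolding MB_def by blast
        obtain a' where a': "a' \<in> A" "{a,b} = {a', g {a,b}}" "g {a,b} \<in> B" using g[OF ab(3)] by blast
        have "(a = a' \<and> b = g {a,b}) \<or> (a = g {a,b} \<and> b = a')" using a'(2) by (simp add: doubleton_eq_iff)
        then have "b = g {a,b}" using a'(1) ab(2) disj by blast
        then show "b \<in> g ` M" using ab(3) by blast
      qed
    qed
    have "card (g ` M) = card M" using injg by (rule card_image)
    then show ?thesis using gM by simp
  qed
  have cardV': "card V' = card V - card M"
    unfolding V'_def using card_Diff_subset[OF finMB MBV] cardMB by simp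
  define ext where "ext g = (\<lambda>x. if x \<in> V' then g x else if x \<in> V then g (p x) else undefined)" for g :: "'a \<Rightarrow> nat"
  define I where "I = {g \<in> V' \<rightarrow>\<^sub>E {..<n}. inj_on g V'}"
  have bij: "bij_betw (\<lambda>f. restrict f V') (S n M) I"
  proof (rule bij_betw_byWitness[where f' = ext])
    show "\<forall>f\<in>S n M. ext (restrict f V') = f"
    proof
      fix f assume fS: "f \<in> S n M"
      have f: "f \<in> V \<rightarrow>\<^sub>E {..<n}" "\<forall>a\<in>A. \<forall>b\<in>B. f a = f b \<longleftrightarrow> {a,b} \<in> M"
        using fS unfolding S_def by blast+
      show "ext (restrict f V') = f"
      proof
        fix x
        show "ext (restrict f V') x = f x"
        proof (cases "x \<in> V'")
          case True then show ?thesis unfolding ext_def by simp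
        next
          case nV': False
          show ?thesis
          proof (cases "x \<in> V")
            case True
            then have xMB: "x \<in> MB" using nV' unfolding V'_def by blast
            have "p x \<in> V'" using p[OF xMB] AV' by blast
            moreover have "f (p x) = f x" using p[OF xMB] f(2) xMB MBB by blast
            ultimately show ?thesis unfolding ext_def using nV' True by simp
          next
            case False
            have "f x = undefined" using PiE_arb[OF f(1) False] .
            moreover have "ext (restrict f V') x = undefined" unfolding ext_def using nV' False by simp
            ultimately show ?thesis by simp
          qed
        qed
      qed
    qed
    show "\<forall>g\<in>I. restrict (ext g) V' = g"
    proof
      fix g assume "g \<in> I"
      then have g: "g \<in> V' \<rightarrow>\<^sub>E {..<n}" unfolding I_def by blast
      show "restrict (ext g) V' = g"
      proof
        fix x show "restrict (ext g) V' x = g x"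
        proof (cases "x \<in> V'")
          case True then show ?thesis by (simp add: ext_def)
        next
          case False
          have "g x = undefined" using PiE_arb[OF g False] .
          moreover have "restrict (ext g) V' x = undefined" using False by simp
          ultimately show ?thesis by simp
        qed
      qed
    qed
    show "(\<lambda>f. restrict f V') ` S n M \<subseteq> I"
    proof
      fix h assume "h \<in> (\<lambda>f. restrict f V') ` S n M"
      then obtain f where fS: "f \<in> S n M" and h: "h = restrict f V'" by blast
      have f: "f \<in> V \<rightarrow>\<^sub>E {..<n}" "inj_on f A" "inj_on f B" "\<forall>a\<in>A. \<forall>b\<in>B. f a = f b \<longleftrightarrow> {a,b} \<in> M"
        using fS unfolding S_def by blast+
      have "restrict f V' \<in> V' \<rightarrow>\<^sub>E {..<n}" using f(1) V'V by auto
      moreover have "inj_on f V'"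
      proof (rule inj_onI)
        fix x y assume xy: "x \<in> V'" "y \<in> V'" "f x = f y"
        have xV: "x \<in> A \<or> (x \<in> B \<and> x \<notin> MB)" "y \<in> A \<or> (y \<in> B \<and> y \<notin> MB)"
          using xy VAB unfolding V'_def by auto
        show "x = y"
        proof (cases "x \<in> A")
          case xA: True
          show ?thesis
          proof (cases "y \<in> A")
            case True then show ?thesis using xA xy f(2) by (meson inj_onD)
          next
            case False
            then have "y \<in> B" "y \<notin> MB" using xV by auto
            moreover have "{x,y} \<in> M" using f(4) xA \<open>y \<in> B\<close> xy(3) by blast
            ultimately show ?thesis using xA unfolding MB_def by blast
          qed
        next
          case xA: False
          then have xB: "x \<in> B" "x \<notin> MB" using xV by auto
          show ?thesis
          proof (cases "y \<in> A")
            case True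
            moreover have "{y,x} \<in> M" using f(4) True xB xy(3) by metis
            ultimately show ?thesis using xB unfolding MB_def by blast
          next
            case False
            then have "y \<in> B" using xV by auto
            then show ?thesis using xB xy f(3) by (meson inj_onD)
          qed
        qed
      qed
      then have "inj_on (restrict f V') V'" by (simp add: inj_on_def)
      ultimately show "h \<in> I" unfolding I_def h by blast
    qed
    show "ext ` I \<subseteq> S n M"
    proof
      fix h assume "h \<in> ext ` I"
      then obtain g where gI: "g \<in> I" and h: "h = ext g" by blast
      have g: "g \<in> V' \<rightarrow>\<^sub>E {..<n}" "inj_on g V'" using gI unfolding I_def by blast+
      have extA: "ext g a = g a" if "a \<in> A" for a using that AV' unfolding ext_def by auto
      have extB1: "ext g b = g b" if "b \<in> B" "b \<notin> MB" for b using that unfolding ext_def V'_def VAB by auto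
      have extB2: "ext g b = g (p b)" if "b \<in> MB" for b using that MBV unfolding ext_def V'_def by auto
      have pV': "p b \<in> V'" if "b \<in> MB" for b using p[OF that] AV' by blast
      have "ext g \<in> V \<rightarrow>\<^sub>E {..<n}"
      proof (rule PiE_I)
        fix x assume "x \<in> V"
        then show "ext g x \<in> {..<n}"
          using g(1) pV' unfolding ext_def V'_def by (auto simp: PiE_iff)
      next
        fix x assume "x \<notin> V"
        then show "ext g x = undefined" using V'V unfolding ext_def by auto
      qed
      moreover have "inj_on (ext g) A"
        using g(2) AV' extA by (simp add: inj_on_def subset_iff)
      moreover have "inj_on (ext g) B"
      proof (rule inj_onI)
        fix x y assume xy: "x \<in> B" "y \<in> B" "ext g x = ext g y"
        show "x = y"
        proof (cases "x \<in> MB")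
          case xM: True
          show ?thesis
          proof (cases "y \<in> MB")
            case True
            then have "g (p x) = g (p y)" using xM xy(3) extB2 by simp
            then have "p x = p y" using g(2) pV' xM True by (meson inj_onD)
            then have "{p x, x} \<inter> {p y, y} \<noteq> {}" by blast
            then have "{p x, x} = {p y, y}" using Mats_disj[OF M] p xM True by blast
            then have "x = y \<or> x = p y" unfolding doubleton_eq_iff by blast
            then show ?thesis using p[OF True] xy(1) disj by blast
          next
            case False
            then have "g (p x) = g y" using xM xy extB1 extB2 by simp
            moreover have "y \<in> V'" using False xy(2) VAB unfolding V'_def by blast
            ultimately have "p x = y" using g(2) pV' xM by (meson inj_onD)
            then show ?thesis using p[OF xM] xy(2) disj by blast
          qed
        next
          case xM: False
          have xV': "x \<in> V'" using xM xy(1) VAB unfolding V'_def by blast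
          show ?thesis
          proof (cases "y \<in> MB")
            case True
            then have "g x = g (p y)" using xM xy extB1 extB2 by simp
            then have "x = p y" using g(2) pV' True xV' by (meson inj_onD)
            then show ?thesis using p[OF True] xy(1) disj by blast
          next
            case False
            then have "g x = g y" using xM xy extB1 by simp
            moreover have "y \<in> V'" using False xy(2) VAB unfolding V'_def by blast
            ultimately show ?thesis using g(2) xV' by (meson inj_onD)
          qed
        qed
      qed
      moreover have "ext g a = ext g b \<longleftrightarrow> {a,b} \<in> M" if ab: "a \<in> A" "b \<in> B" for a b
      proof (cases "b \<in> MB")
        case True
        have "ext g a = ext g b \<longleftrightarrow> g a = g (p b)" using extA extB2 ab True by simp
        also have "\<dots> \<longleftrightarrow> a = p b" using g(2) pV' True AV' ab(1) by (meson inj_onD subsetD)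
        also have "\<dots> \<longleftrightarrow> {a,b} \<in> M" using puniq ab p[OF True] by blast
        finally show ?thesis .
      next
        case False
        have bV': "b \<in> V'" using False ab(2) VAB unfolding V'_def by blast
        have "a \<noteq> b" using ab disj by blast
        then have "ext g a \<noteq> ext g b" using extA extB1 ab False g(2) bV' AV' by (metis inj_onD subsetD)
        moreover have "{a,b} \<notin> M" using False ab unfolding MB_def by blast
        ultimately show ?thesis by blast
      qed
      ultimately show "h \<in> S n M" unfolding S_def h by blast
    qed
  qed
  have "card (S n M) = card I" using bij by (rule bij_betw_same_card)
  also have "\<dots> = card {..<n} ^ (card V' - card V') * prod ((-) (card {..<n})) {0..<card V'}"
    unfolding I_def by (rule card_inj_on_subset_funcset) (use finV' in auto)
  also have "\<dots> = (\<Prod>i\<in>{0..<card V - card M}. n - i)" using cardV' by simp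
  finally show ?thesis .
qed


lemma finS: "finite (S n M)"
proof -
  have "S n M \<subseteq> V \<rightarrow>\<^sub>E {..<n}" unfolding S_def by blast
  then show ?thesis using fin by (meson finite_PiE finite_lessThan finite_subset)
qed

lemma count_nat: "card (colourings V E n) =
   (\<Sum>i\<le>card A. matching_number F i * (\<Prod>t\<in>{0..<card V - i}. n - t))"
proof -
  have "card (colourings V E n) = card (\<Union>M\<in>Mats. S n M)" using colourings_eq by simp
  also have "\<dots> = (\<Sum>M\<in>Mats. card (S n M))"
  proof (rule card_UN_disjoint)
    show "finite Mats" by (rule finMats)
    show "\<forall>M\<in>Mats. finite (S n M)" using finS by blast
    show "\<forall>M\<in>Mats. \<forall>M'\<in>Mats. M \<noteq> M' \<longrightarrow> S n M \<inter> S n M' = {}"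
      using S_disj by blast
  qed
  also have "\<dots> = (\<Sum>M\<in>Mats. (\<Prod>t\<in>{0..<card V - card M}. n - t))"
    using card_S by (meson sum.cong)
  also have "\<dots> = (\<Sum>i\<le>card A. \<Sum>M\<in>{M\<in>Mats. card M = i}. (\<Prod>t\<in>{0..<card V - card M}. n - t))"
    by (rule sum.group[symmetric]) (use finMats card_M_le in auto)
  also have "\<dots> = (\<Sum>i\<le>card A. matching_number F i * (\<Prod>t\<in>{0..<card V - i}. n - t))"
  proof (rule sum.cong[OF refl])
    fix i
    have eq: "{M\<in>Mats. card M = i} = matchings F i"
      unfolding Mats_def matchings_def by blast
    have "(\<Sum>M\<in>{M\<in>Mats. card M = i}. (\<Prod>t\<in>{0..<card V - card M}. n - t))
        = (\<Sum>M\<in>{M\<in>Mats. card M = i}. (\<Prod>t\<in>{0..<card V - i}. n - t))"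
      by (rule sum.cong) auto
    also have "\<dots> = card {M\<in>Mats. card M = i} * (\<Prod>t\<in>{0..<card V - i}. n - t)" by simp
    finally show "(\<Sum>M\<in>{M\<in>Mats. card M = i}. (\<Prod>t\<in>{0..<card V - card M}. n - t))
        = matching_number F i * (\<Prod>t\<in>{0..<card V - i}. n - t)"
      unfolding matching_number_def eq .
  qed
  finally show ?thesis .
qed


end

definition ffpoly :: "nat \<Rightarrow> nat \<Rightarrow> int poly" where
  "ffpoly c m = (\<Prod>i<m. [:- (int c + int i), 1:])"

lemma poly_ffpoly: "poly (ffpoly c m) x = (\<Prod>i<m. x - (int c + int i))"
  unfolding ffpoly_def by (auto simp: poly_prod intro!: prod.cong)

lemma poly_falling: "poly (falling_poly m) x = (\<Prod>i<m. x - int i)"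
  unfolding falling_poly_def by (simp add: poly_prod)

lemma falling_split: "falling_poly (k + m) = falling_poly k * ffpoly k m"
proof (induction m)
  case 0 then show ?case by (simp add: ffpoly_def)
next
  case (Suc m)
  have "falling_poly (k + Suc m) = falling_poly (k + m) * [:- int (k + m), 1:]"
    unfolding falling_poly_def by simp
  also have "\<dots> = (falling_poly k * ffpoly k m) * [:- int (k + m), 1:]" by (simp only: Suc.IH)
  also have "\<dots> = falling_poly k * (ffpoly k m * [:- (int k + int m), 1:])" by (simp only: mult.assoc of_nat_add)
  also have "ffpoly k m * [:- (int k + int m), 1:] = ffpoly k (Suc m)"
    unfolding ffpoly_def by simp
  finally show ?case .
qed

lemma falling_nz: "falling_poly k \<noteq> 0"
  unfolding falling_poly_def by (simp add: prod_zero_iff)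

lemma nat_ff: "int (\<Prod>t\<in>{0..<m}. n - t) = (\<Prod>t<m. int n - int t)"
proof (induction m)
  case 0 then show ?case by simp
next
  case (Suc m)
  show ?case
  proof (cases "m \<le> n")
    case True
    then show ?thesis using Suc by (simp add: of_nat_diff)
  next
    case False
    then have "n \<in> {0..<m}" "n \<in> {..<m}" by auto
    then have "(\<Prod>t\<in>{0..<m}. n - t) = 0" "(\<Prod>t<m. int n - int t) = 0"
      by (auto intro!: prod_zero)
    then show ?thesis by simp
  qed
qed

lemma poly_eq_on_nat:
  fixes p q :: "int poly"
  assumes "\<And>n::nat. poly p (int n) = poly q (int n)" shows "p = q"
proof (rule ccontr)
  assume "p \<noteq> q"
  then have "p - q \<noteq> 0" by simp
  then have fin: "finite {x. poly (p - q) x = 0}" by (rule poly_roots_finite)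
  have "range int \<subseteq> {x. poly (p - q) x = 0}" using assms by auto
  moreover have "infinite (range int)" by (meson finite_imageD inj_of_nat infinite_UNIV_nat)
  ultimately show False using fin finite_subset by blast
qed

lemma gen_factor:
  assumes "biclique j k V E"
  shows "interesting_factor k V E = (\<Sum>i\<le>j. smult (int (matching_number (compl_edges V E) i)) (ffpoly k (j - i)))"
proof -
  obtain A B where AB: "simple_graph V E" "A \<inter> B = {}" "V = A \<union> B" "card A = j" "card B = k"
    "all_pairs A \<subseteq> E" "all_pairs B \<subseteq> E" using assms unfolding biclique_def by blast
  interpret bic V E A B
    using AB unfolding simple_graph_def by unfold_locales auto
  have cV: "card V = j + k" using AB finA finB by (simp add: card_Un_disjoint)
  define m where "m i = int (matching_number (compl_edges V E) i)" for i
  define q where "q = (\<Sum>i\<le>j. smult (m i) (ffpoly k (j - i)))"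
  define P where "P = (\<Sum>i\<le>j. smult (m i) (falling_poly (j + k - i)))"
  have PP: "poly P (int n) = int (card (colourings V E n))" for n
  proof -
    have "int (card (colourings V E n)) = (\<Sum>i\<le>j. m i * (\<Prod>t<j + k - i. int n - int t))"
      unfolding count_nat m_def F_def cV AB(4) by (simp add: nat_ff del: of_nat_prod)
    also have "\<dots> = poly P (int n)"
      unfolding P_def by (simp add: poly_sum poly_falling)
    finally show ?thesis by simp
  qed
  have "chrom_poly V E = P"
    unfolding chrom_poly_def
  proof (rule the_equality)
    show "\<forall>n. poly P (int n) = int (card (colourings V E n))" using PP by blast
    fix p assume "\<forall>n. poly p (int n) = int (card (colourings V E n))"
    then show "p = P" using PP by (intro poly_eq_on_nat) simp
  qed
  moreover have "P = falling_poly k * q"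
  proof -
    have "P = (\<Sum>i\<le>j. smult (m i) (falling_poly k * ffpoly k (j - i)))"
      unfolding P_def
    proof (rule sum.cong[OF refl])
      fix i assume "i \<in> {..j}"
      then have "j + k - i = k + (j - i)" by simp
      then show "smult (m i) (falling_poly (j + k - i)) = smult (m i) (falling_poly k * ffpoly k (j - i))"
        by (simp add: falling_split)
    qed
    also have "\<dots> = falling_poly k * q" unfolding q_def by (simp add: sum_distrib_left)
    finally show ?thesis .
  qed
  ultimately have "interesting_factor k V E = (falling_poly k * q) div falling_poly k"
    unfolding interesting_factor_def by simp
  also have "\<dots> = q" using falling_nz by simp
  finally show ?thesis unfolding q_def m_def .
qed

theorem mainTheorem2:
  fixes VG :: "'a set" and EG :: "'a set set" and VH :: "'b set" and EH :: "'b set set"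
    and j kG kH :: nat
  assumes "1 \<le> j" and "j \<le> kG" and "kG \<le> kH"
    and "biclique j kG VG EG" and "biclique j kH VH EH"
    and "matching_equivalent (compl_edges VG EG) (compl_edges VH EH)"
  shows "interesting_factor kG VG EG
           = pcompose (interesting_factor kH VH EH) [:int kH - int kG, 1:]"
proof -
  have meq: "matching_number (compl_edges VG EG) i = matching_number (compl_edges VH EH) i" for i
    using assms(6) unfolding matching_equivalent_def by blast
  show ?thesis
    unfolding gen_factor[OF assms(4)] gen_factor[OF assms(5)]
  proof (rule poly_eq_on_nat)
    fix n :: nat
    show "poly (\<Sum>i\<le>j. smult (int (matching_number (compl_edges VG EG) i)) (ffpoly kG (j - i))) (int n) =
          poly (pcompose (\<Sum>i\<le>j. smult (int (matching_number (compl_edges VH EH) i)) (ffpoly kH (j - i)))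
             [:int kH - int kG, 1:]) (int n)"
      by (simp add: poly_pcompose poly_sum poly_ffpoly meq algebra_simps)
  qed
qed

end
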